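(* Let $|\Psi\rangle\in\mathcal{B}^n$ be an $M$-party stabilizer state with stabilizer group $S$, and suppose $S=S_{loc}:=\sum_{\alpha\in M}S_{\hat\alpha}$. Then $\Gamma(\Psi)=\{|\Psi\rangle\langle\Psi|\}$, where $\Gamma(\Psi)$ is the set of density operators $\rho$ on $\mathcal{B}^n$ with $\mathrm{Tr}_\alpha\rho=\mathrm{Tr}_\alpha|\Psi\rangle\langle\Psi|$ for all $\alpha\in M$.
   Context: Let $G^n\cong\mathbb{F}_2^{2n}$, with elements $f=(a_1,b_1,\dots,a_n,b_n)$; $\sigma_{00}=I,\sigma_{10}=\sigma^x,\sigma_{01}=\sigma^z,\sigma_{11}=\sigma^y$, $\sigma(f)=\sigma_{a_1b_1}\otimes\cdots\otimes\sigma_{a_nb_n}$ on $\mathcal{B}^n=(\mathbb{C}^2)^{\otimes n}$; symplectic form $\omega(f,f')=\sum_j(a_jb_j'+b_ja_j')\bmod 2$. A subspace $S$ is self-dual if $S=\{f:\omega(f,g)=0\ \forall g\in S\}$; a stabilizer state with stabilizer group $S$ (self-dual) is the unique up-to-phase unit vector with $\sigma(f)|\Psi\rangle=\epsilon(f)|\Psi\rangle$ for all $f\in S$ for fixed consistent signs $\epsilon(f)\in\{\pm1\}$. Party $\alpha\in M$ (a finite set) holds $n_\alpha$ qubits, $n=\sum_\alpha n_\alpha$; $f_\alpha$ is the restriction of $f$ to party $\alpha$'s qubits; co-local subgroup $S_{\hat\alpha}=\{g\in S:g_\alpha=0\}$. $\mathrm{Tr}_\alpha$ is the partial trace over party $\alpha$'s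 qubits. *)

theory Defs
  imports Complex_Main "Jordan_Normal_Form.Matrix"
begin

text \<open>Elements of G^n = F_2^{2n}: pairs (a,b) of bit sequences, supported on qubits 0..n-1.
  Qubit k corresponds to bit k of a computational-basis index i < 2^n.\<close>

type_synonym pvec = "(nat \<Rightarrow> bool) \<times> (nat \<Rightarrow> bool)"

definition Gn :: "nat \<Rightarrow> pvec set" where
  "Gn n = {(a, b). \<forall>j\<ge>n. \<not> a j \<and> \<not> b j}"

definition pzero :: pvec where
  "pzero = (\<lambda>_. False, \<lambda>_. False)"

definition padd :: "pvec \<Rightarrow> pvec \<Rightarrow> pvec" where
  "padd f g = (\<lambda>j. fst f j \<noteq> fst g j, \<lambda>j. snd f j \<noteq> snd g j)"

definition symp :: "nat \<Rightarrow> pvec \<Rightarrow> pvec \<Rightarrow> bool" where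
  "symp n f g = odd (card {j. j < n \<and> fst f j \<and> snd g j} + card {j. j < n \<and> snd f j \<and> fst g j})"

definition f2_subspace :: "nat \<Rightarrow> pvec set \<Rightarrow> bool" where
  "f2_subspace n S \<longleftrightarrow> S \<subseteq> Gn n \<and> pzero \<in> S \<and> (\<forall>f\<in>S. \<forall>g\<in>S. padd f g \<in> S)"

definition self_dual :: "nat \<Rightarrow> pvec set \<Rightarrow> bool" where
  "self_dual n S \<longleftrightarrow> f2_subspace n S \<and> S = {f \<in> Gn n. \<forall>g\<in>S. \<not> symp n f g}"

inductive_set f2_span :: "pvec set \<Rightarrow> pvec set" for X where
  zero: "pzero \<in> f2_span X"
| add: "x \<in> X \<Longrightarrow> y \<in> f2_span X \<Longrightarrow> padd x y \<in> f2_span X"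

definition pauli1 :: "bool \<Rightarrow> bool \<Rightarrow> bool \<Rightarrow> bool \<Rightarrow> complex" where
  "pauli1 a b x y =
     (if \<not> a \<and> \<not> b then (if x = y then 1 else 0)
      else if a \<and> \<not> b then (if x \<noteq> y then 1 else 0)
      else if \<not> a \<and> b then (if x = y then (if x then -1 else 1) else 0)
      else (if x = y then 0 else (if x then \<i> else -\<i>)))"

definition pauli :: "nat \<Rightarrow> pvec \<Rightarrow> complex mat" where
  "pauli n f = mat (2^n) (2^n)
     (\<lambda>(i, j). \<Prod>k<n. pauli1 (fst f k) (snd f k) (bit i k) (bit j k))"

definition unit_vec_n :: "nat \<Rightarrow> complex vec \<Rightarrow> bool" where
  "unit_vec_n n \<psi> \<longleftrightarrow> dim_vec \<psi> = 2^n \<and> (\<Sum>i<2^n. (cmod (\<psi> $ i))\<^sup>2) = 1"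

definition stabilizer_state :: "nat \<Rightarrow> pvec set \<Rightarrow> complex vec \<Rightarrow> bool" where
  "stabilizer_state n S \<psi> \<longleftrightarrow> self_dual n S \<and> unit_vec_n n \<psi> \<and>
     (\<exists>\<epsilon> :: pvec \<Rightarrow> complex. \<forall>f\<in>S. (\<epsilon> f = 1 \<or> \<epsilon> f = -1) \<and> pauli n f *\<^sub>v \<psi> = \<epsilon> f \<cdot>\<^sub>v \<psi>)"

text \<open>Co-local subgroup S_{hat alpha}; qubit j belongs to party  part j.\<close>
definition colocal :: "nat \<Rightarrow> (nat \<Rightarrow> 'm) \<Rightarrow> pvec set \<Rightarrow> 'm \<Rightarrow> pvec set" where
  "colocal n part S \<alpha> = {g \<in> S. \<forall>j<n. part j = \<alpha> \<longrightarrow> \<not> fst g j \<and> \<not> snd g j}"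

definition S_loc :: "nat \<Rightarrow> (nat \<Rightarrow> 'm) \<Rightarrow> 'm set \<Rightarrow> pvec set \<Rightarrow> pvec set" where
  "S_loc n part M S = f2_span (\<Union>\<alpha>\<in>M. colocal n part S \<alpha>)"

definition proj :: "nat \<Rightarrow> complex vec \<Rightarrow> complex mat" where
  "proj n \<psi> = mat (2^n) (2^n) (\<lambda>(i, j). \<psi> $ i * cnj (\<psi> $ j))"

definition density_op :: "nat \<Rightarrow> complex mat \<Rightarrow> bool" where
  "density_op n \<rho> \<longleftrightarrow> \<rho> \<in> carrier_mat (2^n) (2^n) \<and>
     (\<forall>v :: nat \<Rightarrow> complex.
        let q = (\<Sum>i<2^n. \<Sum>j<2^n. cnj (v i) * \<rho> $$ (i, j) * v j) in Im q = 0 \<and> Re q \<ge> 0) \<and>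
     (\<Sum>i<2^n. \<rho> $$ (i, i)) = 1"

definition mix :: "nat \<Rightarrow> (nat \<Rightarrow> 'm) \<Rightarrow> 'm \<Rightarrow> nat \<Rightarrow> nat \<Rightarrow> nat" where
  "mix n part \<alpha> i k = (\<Sum>l<n. if (if part l = \<alpha> then bit k l else bit i l) then 2^l else 0)"

text \<open>Partial trace over party alpha's qubits, as a kernel indexed by the remaining bits of i, j
  (it depends only on the bits of i and j at qubits not belonging to alpha).\<close>
definition ptrace :: "nat \<Rightarrow> (nat \<Rightarrow> 'm) \<Rightarrow> 'm \<Rightarrow> complex mat \<Rightarrow> nat \<Rightarrow> nat \<Rightarrow> complex" where
  "ptrace n part \<alpha> \<rho> i j =
     (\<Sum>k\<in>{k. k < 2^n \<and> (\<forall>l<n. part l \<noteq> \<alpha> \<longrightarrow> \<not> bit k l)}.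
        \<rho> $$ (mix n part \<alpha> i k, mix n part \<alpha> j k))"

definition Gamma :: "nat \<Rightarrow> (nat \<Rightarrow> 'm) \<Rightarrow> 'm set \<Rightarrow> complex vec \<Rightarrow> complex mat set" where
  "Gamma n part M \<psi> = {\<rho>. density_op n \<rho> \<and>
     (\<forall>\<alpha>\<in>M. ptrace n part \<alpha> \<rho> = ptrace n part \<alpha> (proj n \<psi>))}"

end

theory Submission
  imports Defs
begin

definition ph :: "bool \<Rightarrow> bool \<Rightarrow> bool \<Rightarrow> bool \<Rightarrow> complex" where
  "ph a b a' b' = (if (\<not>a\<and>\<not>b) \<or> (\<not>a'\<and>\<not>b') \<or> (a=a'\<and>b=b') then 1
     else if (a\<and>\<not>b\<and>\<not>a'\<and>b') \<or> (\<not>a\<and>b\<and>a'\<and>b') \<or> (a\<and>b\<and>a'\<and>\<not>b') then -\<i> else \<i>)"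

lemma pauli1_herm: "pauli1 a b y x = cnj (pauli1 a b x y)"
  by (cases a; cases b; cases x; cases y; simp add: pauli1_def)

lemma pauli1_mult: "pauli1 a b x False * pauli1 a' b' False z + pauli1 a b x True * pauli1 a' b' True z
   = ph a b a' b' * pauli1 (a\<noteq>a') (b\<noteq>b') x z"
  by (cases a; cases b; cases a'; cases b'; cases x; cases z; simp add: pauli1_def ph_def)

lemma ph_comm: "ph a b a' b' = (if (a\<and>b') \<noteq> (b\<and>a') then -1 else 1) * ph a' b' a b"
  by (cases a; cases b; cases a'; cases b'; simp add: ph_def)

lemma ph_self: "ph a b a b = 1" by (simp add: ph_def)

lemma pauli1_complete: "(\<Sum>a\<in>UNIV. \<Sum>b\<in>UNIV. cnj (pauli1 a b x y) * pauli1 a b i j) = (if i = x \<and> j = y then 2 else 0)"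
  by (cases x; cases y; cases i; cases j; simp add: pauli1_def UNIV_bool)

lemma bit_lt_pow: "(p::nat) < 2^n \<Longrightarrow> bit p k \<Longrightarrow> k < n"
  by (metis bit_take_bit_iff take_bit_nat_eq_self_iff)

lemma sum_bits_prod:
  fixes F :: "nat \<Rightarrow> bool \<Rightarrow> 'a::comm_semiring_1"
  shows "(\<Sum>p<(2::nat)^n. \<Prod>k<n. F k (bit p k)) = (\<Prod>k<n. F k False + F k True)"
proof (induction n)
  case 0
  then show ?case by simp
next
  case (Suc n)
  have split: "{..<2^Suc n} = {..<(2::nat)^n} \<union> (\<lambda>p. p + 2^n) ` {..<2^n}"
  proof -
    have "{..<(2::nat)^Suc n} = {..<2^n} \<union> {2^n..<2^n+2^n}" by auto
    moreover have "{(2::nat)^n..<2^n+2^n} = (\<lambda>p. p + 2^n) ` {..<2^n}"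
      by (simp add: image_add_atLeastLessThan' lessThan_atLeast0)
    ultimately show ?thesis by simp
  qed
  have disj: "{..<(2::nat)^n} \<inter> (\<lambda>p. p + 2^n) ` {..<2^n} = {}" by auto
  have b1: "bit (p + 2^n) k = (if k = n then True else bit p k)" if "p < 2^n" "k \<le> n" for p k :: nat
  proof -
    have "bit (p + 2^n) k = (bit p k \<or> bit ((2::nat)^n) k)"
      by (rule bit_disjunctive_add_iff) (use bit_lt_pow[OF that(1)] in \<open>auto simp: bit_exp_iff\<close>)
    then show ?thesis using that bit_lt_pow[OF that(1)] by (auto simp: bit_exp_iff)
  qed
  have "(\<Sum>p<(2::nat)^Suc n. \<Prod>k<Suc n. F k (bit p k))
      = (\<Sum>p<(2::nat)^n. \<Prod>k<Suc n. F k (bit p k)) + (\<Sum>p<(2::nat)^n. \<Prod>k<Suc n. F k (bit (p+2^n) k))"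
    unfolding split by (subst sum.union_disjoint) (auto simp: sum.reindex inj_on_def)
  also have "(\<Sum>p<(2::nat)^n. \<Prod>k<Suc n. F k (bit p k)) = (\<Sum>p<(2::nat)^n. \<Prod>k<n. F k (bit p k)) * F n False"
    unfolding sum_distrib_right
  proof (rule sum.cong[OF refl])
    fix p assume p: "p \<in> {..<(2::nat)^n}"
    have "\<not> bit p n" using p bit_lt_pow by blast
    then show "(\<Prod>k<Suc n. F k (bit p k)) = (\<Prod>k<n. F k (bit p k)) * F n False" by simp
  qed
  also have "(\<Sum>p<(2::nat)^n. \<Prod>k<Suc n. F k (bit (p+2^n) k)) = (\<Sum>p<(2::nat)^n. \<Prod>k<n. F k (bit p k)) * F n True"
    unfolding sum_distrib_right
  proof (rule sum.cong[OF refl])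
    fix p assume p: "p \<in> {..<(2::nat)^n}"
    have "(\<Prod>k<n. F k (bit (p+2^n) k)) = (\<Prod>k<n. F k (bit p k))"
      using p by (intro prod.cong) (auto simp: b1)
    then show "(\<Prod>k<Suc n. F k (bit (p+2^n) k)) = (\<Prod>k<n. F k (bit p k)) * F n True"
      using p by (simp add: b1)
  qed
  finally show ?case using Suc by (simp add: distrib_left)
qed

definition sg :: "nat \<Rightarrow> pvec \<Rightarrow> nat \<Rightarrow> nat \<Rightarrow> complex" where
  "sg n f i j = (\<Prod>k<n. pauli1 (fst f k) (snd f k) (bit i k) (bit j k))"

definition cf :: "nat \<Rightarrow> pvec \<Rightarrow> pvec \<Rightarrow> complex" where
  "cf n f g = (\<Prod>k<n. ph (fst f k) (snd f k) (fst g k) (snd g k))"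

lemma sg_mult: "(\<Sum>b<(2::nat)^n. sg n f a b * sg n g b c) = cf n f g * sg n (padd f g) a c"
proof -
  have "(\<Sum>b<(2::nat)^n. sg n f a b * sg n g b c)
     = (\<Sum>b<(2::nat)^n. \<Prod>k<n. pauli1 (fst f k) (snd f k) (bit a k) (bit b k) * pauli1 (fst g k) (snd g k) (bit b k) (bit c k))"
    by (simp add: sg_def prod.distrib)
  also have "\<dots> = (\<Prod>k<n. ph (fst f k) (snd f k) (fst g k) (snd g k) * pauli1 (fst (padd f g) k) (snd (padd f g) k) (bit a k) (bit c k))"
    by (subst sum_bits_prod) (simp add: pauli1_mult padd_def)
  also have "\<dots> = cf n f g * sg n (padd f g) a c"
    by (simp add: cf_def sg_def prod.distrib)
  finally show ?thesis .
qed

lemma sg_herm: "sg n f j i = cnj (sg n f i j)"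
  unfolding sg_def cnj_prod by (rule prod.cong[OF refl], rule pauli1_herm)

lemma prod_if_const: "(\<Prod>k<(n::nat). if P k then (c::complex) else 0) = (if \<forall>k<n. P k then c^n else 0)"
  by (induction n) (auto simp: less_Suc_eq)

lemma bits_eq: "(a::nat) < 2^n \<Longrightarrow> c < 2^n \<Longrightarrow> (\<forall>k<n. bit a k = bit c k) \<longleftrightarrow> a = c"
  by (metis bit_eq_iff bit_lt_pow)

lemma sg_zero: "a < 2^n \<Longrightarrow> c < 2^n \<Longrightarrow> sg n pzero a c = (if a = c then 1 else 0)"
proof -
  assume a: "a < 2^n" and c: "c < 2^n"
  have "sg n pzero a c = (\<Prod>k<n. if bit a k = bit c k then 1 else 0)"
    by (simp add: sg_def pzero_def pauli1_def)
  also have "\<dots> = (if a = c then 1 else 0)"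
    using prod_if_const[where n=n and P="\<lambda>k. bit a k = bit c k" and c=1] bits_eq[OF a c] by simp
  finally show ?thesis .
qed

lemma padd_self: "padd f f = pzero"
  by (simp add: padd_def pzero_def)

lemma padd_comm: "padd f g = padd g f"
  by (auto simp: padd_def)

lemma cf_self: "cf n f f = 1"
  by (simp add: cf_def ph_self)

lemma prod_sign: "(\<Prod>k<(n::nat). if P k then -1 else (1::complex)) = (-1) ^ card {k. k < n \<and> P k}"
proof (induction n)
  case 0 then show ?case by simp
next
  case (Suc n)
  show ?case
  proof (cases "P n")
    case True
    have e: "{k. k < Suc n \<and> P k} = insert n {k. k < n \<and> P k}" using True by (auto simp: less_Suc_eq)
    have "card {k. k < Suc n \<and> P k} = Suc (card {k. k < n \<and> P k})" unfolding e by simp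
    then show ?thesis using Suc True by simp
  next
    case False
    have e: "{k. k < Suc n \<and> P k} = {k. k < n \<and> P k}" using False by (auto simp: less_Suc_eq)
    show ?thesis unfolding e using Suc False by simp
  qed
qed

lemma cf_comm: "cf n f g = (if symp n f g then -1 else 1) * cf n g f"
proof -
  let ?X = "\<lambda>k. fst f k \<and> snd g k" and ?Y = "\<lambda>k. snd f k \<and> fst g k"
  have "cf n f g = (\<Prod>k<n. ((if ?X k then -1 else 1) * (if ?Y k then -1 else 1)) * ph (fst g k) (snd g k) (fst f k) (snd f k))"
    unfolding cf_def by (rule prod.cong[OF refl], subst ph_comm) auto
  also have "\<dots> = (-1) ^ card {k. k < n \<and> ?X k} * (-1) ^ card {k. k < n \<and> ?Y k} * cf n g f"
    by (simp add: prod.distrib cf_def prod_sign)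
  also have "(-1::complex) ^ card {k. k < n \<and> ?X k} * (-1) ^ card {k. k < n \<and> ?Y k} = (if symp n f g then -1 else 1)"
    by (simp add: symp_def power_add[symmetric] minus_one_power_iff)
  finally show ?thesis .
qed

lemma pauli1_complete': "(cnj (pauli1 False False x y) * pauli1 False False i j + cnj (pauli1 False True x y) * pauli1 False True i j)
  + (cnj (pauli1 True False x y) * pauli1 True False i j + cnj (pauli1 True True x y) * pauli1 True True i j)
  = (if i = x \<and> j = y then 2 else 0)"
  using pauli1_complete[of x y i j] by (simp add: UNIV_bool add.assoc)

lemma sg_complete:
  assumes "i < 2^n" "j < 2^n" "x < 2^n" "y < 2^n"
  shows "(\<Sum>p<(2::nat)^n. \<Sum>q<(2::nat)^n. cnj (sg n (bit p, bit q) x y) * sg n (bit p, bit q) i j)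
    = (if i = x \<and> j = y then 2^n else 0)"
proof -
  define G where "G k a b = cnj (pauli1 a b (bit x k) (bit y k)) * pauli1 a b (bit i k) (bit j k)" for k a b
  have "(\<Sum>p<(2::nat)^n. \<Sum>q<(2::nat)^n. cnj (sg n (bit p, bit q) x y) * sg n (bit p, bit q) i j)
     = (\<Sum>p<(2::nat)^n. \<Sum>q<(2::nat)^n. \<Prod>k<n. G k (bit p k) (bit q k))"
    by (simp add: sg_def G_def prod.distrib)
  also have "\<dots> = (\<Sum>p<(2::nat)^n. \<Prod>k<n. G k (bit p k) False + G k (bit p k) True)"
    by (subst sum_bits_prod) simp
  also have "\<dots> = (\<Prod>k<n. (G k False False + G k False True) + (G k True False + G k True True))"
    by (subst sum_bits_prod) simp
  also have "\<dots> = (\<Prod>k<n. if bit i k = bit x k \<and> bit j k = bit y k then 2 else 0)"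
    unfolding G_def pauli1_complete' by (rule prod.cong) auto
  also have "\<dots> = (if i = x \<and> j = y then 2^n else 0)"
    using prod_if_const[where n=n and P="\<lambda>k. bit i k = bit x k \<and> bit j k = bit y k" and c=2] bits_eq[OF assms(1,3)] bits_eq[OF assms(2,4)]
    by auto
  finally show ?thesis .
qed

lemma bitsum: "bit (\<Sum>l<n. if Q l then (2::nat)^l else 0) m = (m < n \<and> Q m) \<and> (\<Sum>l<n. if Q l then (2::nat)^l else 0) < 2^n"
proof (induction n arbitrary: m)
  case 0 then show ?case by simp
next
  case (Suc n)
  define s where "s = (\<Sum>l<n. if Q l then (2::nat)^l else 0)"
  have s: "s < 2^n" "\<And>m. bit s m = (m < n \<and> Q m)" using Suc unfolding s_def by auto
  have e: "(\<Sum>l<Suc n. if Q l then (2::nat)^l else 0) = s + (if Q n then 2^n else 0)" by (simp add: s_def)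
  have b: "bit (s + (if Q n then 2^n else 0)) m = (bit s m \<or> bit (if Q n then (2::nat)^n else 0) m)" for m
    by (rule bit_disjunctive_add_iff) (auto simp: s bit_exp_iff)
  show ?case unfolding e b using s by (auto simp: bit_exp_iff less_Suc_eq)
qed

lemma mix_bit: "bit (mix n part \<alpha> i k) l = (l < n \<and> (if part l = \<alpha> then bit k l else bit i l))"
  unfolding mix_def by (rule bitsum[THEN conjunct1])

lemma mix_lt: "mix n part \<alpha> i k < 2^n"
  unfolding mix_def by (rule bitsum[THEN conjunct2])

lemma trace_ptrace:
  fixes A :: "complex mat"
  assumes g: "\<forall>j<n. part j = \<alpha> \<longrightarrow> \<not> fst g j \<and> \<not> snd g j"
  defines "R \<equiv> {i. i < (2::nat)^n \<and> (\<forall>l<n. part l = \<alpha> \<longrightarrow> \<not> bit i l)}"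
  shows "(\<Sum>i<(2::nat)^n. \<Sum>j<(2::nat)^n. sg n g i j * A $$ (j,i)) = (\<Sum>i\<in>R. \<Sum>j\<in>R. sg n g i j * ptrace n part \<alpha> A j i)"
proof -
  define K where "K = {k. k < (2::nat)^n \<and> (\<forall>l<n. part l \<noteq> \<alpha> \<longrightarrow> \<not> bit k l)}"
  define D where "D = {(I,J). I < (2::nat)^n \<and> J < (2::nat)^n \<and> (\<forall>l<n. part l = \<alpha> \<longrightarrow> bit I l = bit J l)}"
  define F where "F = (\<lambda>(I,J). sg n g I J * A $$ (J,I))"
  define \<phi> where "\<phi> = (\<lambda>(k,i,j). (mix n part \<alpha> i k, mix n part \<alpha> j k))"
  have fin: "finite R" "finite K" unfolding R_def K_def by auto
  have sg_inv: "sg n g (mix n part \<alpha> i k) (mix n part \<alpha> j k) = sg n g i j" if "i \<in> R" "j \<in> R" for i j k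
    unfolding sg_def using that g by (intro prod.cong refl) (auto simp: mix_bit R_def pauli1_def)
  have sgz: "sg n g I J = 0" if h: "I < 2^n" "J < 2^n" "(I,J) \<notin> D" for I J :: nat
  proof -
    obtain l where l: "l < n" "part l = \<alpha>" "bit I l \<noteq> bit J l" using h by (auto simp: D_def)
    have "pauli1 (fst g l) (snd g l) (bit I l) (bit J l) = 0" using l g by (auto simp: pauli1_def)
    then show ?thesis unfolding sg_def using l(1) by (intro prod_zero) (auto intro!: bexI[where x=l])
  qed
  have "(\<Sum>i\<in>R. \<Sum>j\<in>R. sg n g i j * ptrace n part \<alpha> A j i)
      = (\<Sum>i\<in>R. \<Sum>j\<in>R. \<Sum>k\<in>K. sg n g i j * A $$ (mix n part \<alpha> j k, mix n part \<alpha> i k))"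
    by (simp add: ptrace_def K_def sum_distrib_left)
  also have "\<dots> = (\<Sum>k\<in>K. \<Sum>i\<in>R. \<Sum>j\<in>R. F (\<phi> (k,i,j)))"
    by (subst sum.swap, subst (2) sum.swap) (auto simp: F_def \<phi>_def sg_inv intro!: sum.cong)
  also have "\<dots> = (\<Sum>x\<in>K \<times> (R \<times> R). F (\<phi> x))"
    by (simp add: sum.cartesian_product)
  also have "\<dots> = sum F D"
  proof (rule sum.reindex_bij_betw)
    show "bij_betw \<phi> (K \<times> R \<times> R) D"
      unfolding bij_betw_def
    proof
      show "inj_on \<phi> (K \<times> R \<times> R)"
      proof (rule inj_onI)
        fix x y
        assume in1': "x \<in> K \<times> R \<times> R" and in2': "y \<in> K \<times> R \<times> R" and eq': "\<phi> x = \<phi> y"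
        obtain k i j where x: "x = (k,i,j)" by (cases x) auto
        obtain k' i' j' where y: "y = (k',i',j')" by (cases y) auto
        have in1: "(k,i,j) \<in> K \<times> R \<times> R" and in2: "(k',i',j') \<in> K \<times> R \<times> R"
          and eq: "\<phi> (k,i,j) = \<phi> (k',i',j')" using in1' in2' eq' x y by auto
        have e1: "mix n part \<alpha> i k = mix n part \<alpha> i' k'" and e2: "mix n part \<alpha> j k = mix n part \<alpha> j' k'"
          using eq by (auto simp: \<phi>_def)
        have "\<forall>l<n. bit k l = bit k' l"
        proof (intro allI impI)
          fix l assume l: "l < n"
          show "bit k l = bit k' l"
          proof (cases "part l = \<alpha>")
            case True then show ?thesis using arg_cong[OF e1, of "\<lambda>x. bit x l"] l by (simp add: mix_bit)
          next
            case False then show ?thesis using in1 in2 l by (auto simp: K_def)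
          qed
        qed
        moreover have "\<forall>l<n. bit i l = bit i' l"
        proof (intro allI impI)
          fix l assume l: "l < n"
          show "bit i l = bit i' l"
          proof (cases "part l = \<alpha>")
            case False then show ?thesis using arg_cong[OF e1, of "\<lambda>x. bit x l"] l by (simp add: mix_bit)
          next
            case True then show ?thesis using in1 in2 l by (auto simp: R_def)
          qed
        qed
        moreover have "\<forall>l<n. bit j l = bit j' l"
        proof (intro allI impI)
          fix l assume l: "l < n"
          show "bit j l = bit j' l"
          proof (cases "part l = \<alpha>")
            case False then show ?thesis using arg_cong[OF e2, of "\<lambda>x. bit x l"] l by (simp add: mix_bit)
          next
            case True then show ?thesis using in1 in2 l by (auto simp: R_def)
          qed
        qed
        ultimately show "x = y" unfolding x y
          using in1 in2 bits_eq[of k n k'] bits_eq[of i n i'] bits_eq[of j n j'] by (auto simp: K_def R_def)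
      qed
      show "\<phi> ` (K \<times> R \<times> R) = D"
      proof
        show "\<phi> ` (K \<times> R \<times> R) \<subseteq> D"
          by (auto simp: \<phi>_def D_def mix_lt mix_bit)
        show "D \<subseteq> \<phi> ` (K \<times> R \<times> R)"
        proof
          fix x assume "x \<in> D"
          then obtain I J where x: "x = (I,J)" "I < 2^n" "J < 2^n" "\<forall>l<n. part l = \<alpha> \<longrightarrow> bit I l = bit J l"
            unfolding D_def by auto
          let ?k = "mix n part \<alpha> 0 I" and ?i = "mix n part \<alpha> I 0" and ?j = "mix n part \<alpha> J 0"
          have "?k \<in> K" "?i \<in> R" "?j \<in> R" by (auto simp: K_def R_def mix_lt mix_bit)
          moreover have "mix n part \<alpha> ?i ?k = I"
            using bits_eq[OF mix_lt x(2), of part \<alpha> ?i ?k, symmetric] by (simp add: mix_bit)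
          moreover have "mix n part \<alpha> ?j ?k = J"
            using bits_eq[OF mix_lt x(3), of part \<alpha> ?j ?k, symmetric] x(4) by (simp add: mix_bit)
          ultimately show "x \<in> \<phi> ` (K \<times> R \<times> R)"
            unfolding x(1) \<phi>_def by (intro image_eqI[where x="(?k,?i,?j)"]) auto
        qed
      qed
    qed
  qed
  also have "\<dots> = (\<Sum>x\<in>{..<(2::nat)^n} \<times> {..<(2::nat)^n}. F x)"
  proof (rule sum.mono_neutral_left)
    show "\<forall>x\<in>{..<(2::nat)^n} \<times> {..<(2::nat)^n} - D. F x = 0"
      using sgz by (auto simp: F_def)
  qed (auto simp: D_def)
  also have "\<dots> = (\<Sum>i<2^n. \<Sum>j<2^n. sg n g i j * A $$ (j,i))"
    by (simp add: sum.cartesian_product F_def)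
  finally show ?thesis by simp
qed

definition qf :: "nat \<Rightarrow> (nat \<Rightarrow> nat \<Rightarrow> complex) \<Rightarrow> (nat \<Rightarrow> complex) \<Rightarrow> complex" where
  "qf N r v = (\<Sum>i<N. \<Sum>j<N. cnj (v i) * r i j * v j)"

definition psd :: "nat \<Rightarrow> (nat \<Rightarrow> nat \<Rightarrow> complex) \<Rightarrow> bool" where
  "psd N r \<longleftrightarrow> (\<forall>v. Im (qf N r v) = 0 \<and> Re (qf N r v) \<ge> 0)"

lemma sum1: "i < (N::nat) \<Longrightarrow> (\<And>a. a \<noteq> i \<Longrightarrow> h a = 0) \<Longrightarrow> (\<Sum>a<N. h a) = (h i :: complex)"
  by (subst sum.mono_neutral_cong_right[of "{..<N}" "{i}" h h]) auto

lemma sum2: "i < (N::nat) \<Longrightarrow> j < N \<Longrightarrow> i \<noteq> j \<Longrightarrow> (\<And>a. a \<noteq> i \<Longrightarrow> a \<noteq> j \<Longrightarrow> h a = 0) \<Longrightarrow> (\<Sum>a<N. h a) = (h i + h j :: complex)"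
  by (subst sum.mono_neutral_cong_right[of "{..<N}" "{i,j}" h h]) auto

lemma qf2:
  assumes "i < N" "j < N" "i \<noteq> j" "\<And>a. a \<noteq> i \<Longrightarrow> a \<noteq> j \<Longrightarrow> v a = 0"
  shows "qf N r v = cnj (v i) * r i i * v i + cnj (v i) * r i j * v j + cnj (v j) * r j i * v i + cnj (v j) * r j j * v j"
proof -
  have A: "qf N r v = (\<Sum>a<N. cnj (v a) * r a i * v i + cnj (v a) * r a j * v j)"
    unfolding qf_def by (intro sum.cong refl sum2) (use assms in auto)
  show ?thesis unfolding A
    by (subst sum2[OF assms(1-3)]) (use assms in auto)
qed

lemma qf1:
  assumes "i < N" "\<And>a. a \<noteq> i \<Longrightarrow> v a = 0"
  shows "qf N r v = cnj (v i) * r i i * v i"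
proof -
  have A: "qf N r v = (\<Sum>a<N. cnj (v a) * r a i * v i)"
    unfolding qf_def by (intro sum.cong refl sum1) (use assms in auto)
  show ?thesis unfolding A
    by (subst sum1[OF assms(1)]) (use assms in auto)
qed

lemma psd_diag_real: "psd N r \<Longrightarrow> i < N \<Longrightarrow> Im (r i i) = 0"
proof -
  assume p: "psd N r" and i: "i < N"
  have "qf N r (\<lambda>a. if a = i then 1 else 0) = r i i"
    using qf1[of i N "\<lambda>a. if a = i then 1 else 0" r] i by simp
  then show ?thesis using p unfolding psd_def by metis
qed

lemma psd_herm:
  assumes p: "psd N r" and ij: "i < N" "j < N"
  shows "r j i = cnj (r i j)"
proof (cases "i = j")
  case True
  then show ?thesis using psd_diag_real[OF p ij(1)] by (simp add: complex_eq_iff)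
next
  case False
  have d: "Im (r i i) = 0" "Im (r j j) = 0" using psd_diag_real[OF p] ij by auto
  have "Im (qf N r (\<lambda>a. if a = i then 1 else if a = j then 1 else 0)) = 0" using p psd_def by blast
  then have 1: "Im (r i j + r j i) = 0"
    using qf2[OF ij False, of "\<lambda>a. if a = i then 1 else if a = j then 1 else 0" r] False d by simp
  have "Im (qf N r (\<lambda>a. if a = i then 1 else if a = j then \<i> else 0)) = 0" using p psd_def by blast
  then have 2: "Re (r i j - r j i) = 0"
    using qf2[OF ij False, of "\<lambda>a. if a = i then 1 else if a = j then \<i> else 0" r] False d by simp
  show ?thesis using 1 2 by (simp add: complex_eq_iff)
qed

lemma qf_pert:
  assumes p: "psd N r" and a: "a < N"
  shows "qf N r (\<lambda>b. w b + (if b = a then t else 0)) = qf N r w + cnj t * (\<Sum>b<N. r a b * w b) + t * cnj (\<Sum>b<N. r a b * w b) + cnj t * r a a * t"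
proof -
  have h: "\<And>i. i < N \<Longrightarrow> r i a = cnj (r a i)" using psd_herm[OF p a] by blast
  have "qf N r (\<lambda>b. w b + (if b = a then t else 0)) =
     (\<Sum>i<N. \<Sum>j<N. cnj (w i) * r i j * w j) + (\<Sum>i<N. \<Sum>j<N. cnj (w i) * r i j * (if j = a then t else 0))
     + (\<Sum>i<N. \<Sum>j<N. cnj (if i = a then t else 0) * r i j * w j) + (\<Sum>i<N. \<Sum>j<N. cnj (if i = a then t else 0) * r i j * (if j = a then t else 0))"
    unfolding qf_def by (simp add: algebra_simps sum.distrib)
  also have "(\<Sum>i<N. \<Sum>j<N. cnj (w i) * r i j * (if j = a then t else 0)) = (\<Sum>i<N. cnj (w i) * r i a * t)"
    by (rule sum.cong[OF refl], rule trans, rule sum1[OF a]) auto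
  also have "\<dots> = t * cnj (\<Sum>b<N. r a b * w b)"
    by (simp add: sum_distrib_left h mult.commute mult.left_commute)
  also have "(\<Sum>i<N. \<Sum>j<N. cnj (if i = a then t else 0) * r i j * w j) = (\<Sum>j<N. cnj t * r a j * w j)"
    by (subst sum1[OF a, where h="\<lambda>i. \<Sum>j<N. cnj (if i = a then t else 0) * r i j * w j"]) auto
  also have "\<dots> = cnj t * (\<Sum>b<N. r a b * w b)"
    by (simp add: sum_distrib_left mult.assoc)
  also have "(\<Sum>i<N. \<Sum>j<N. cnj (if i = a then t else 0) * r i j * (if j = a then t else 0)) = (\<Sum>j<N. cnj t * r a j * (if j = a then t else 0))"
    by (subst sum1[OF a, where h="\<lambda>i. \<Sum>j<N. cnj (if i = a then t else 0) * r i j * (if j = a then t else 0)"]) auto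
  also have "\<dots> = cnj t * r a a * t"
    by (subst sum1[OF a, where h="\<lambda>j. cnj t * r a j * (if j = a then t else 0)"]) auto
  finally show ?thesis unfolding qf_def by simp
qed

lemma psd_kernel_zero:
  assumes p: "psd N r" and a: "a < N" and q: "qf N r w = 0"
  shows "(\<Sum>b<N. r a b * w b) = 0"
proof -
  define z where "z = (\<Sum>b<N. r a b * w b)"
  have "Im (r a a) = 0" using psd_diag_real[OF p a] .
  then obtain d where d: "r a a = complex_of_real d" by (metis complex_is_Real_iff Reals_cases)
  have "qf N r (\<lambda>b. if b = a then 1 else 0) = r a a" using qf1[of a N "\<lambda>b. if b = a then 1 else 0" r] a by simp
  then have d0: "d \<ge> 0" using p d unfolding psd_def by (metis Re_complex_of_real)
  define s :: real where "s = 1 / (d + 1)"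
  have s0: "s > 0" using d0 by (simp add: s_def)
  have sd: "s * d < 1" using d0 by (simp add: s_def field_simps)
  define t where "t = - complex_of_real s * z"
  have zz: "z * cnj z = complex_of_real ((cmod z)^2)" using complex_norm_square[of z] by simp
  have "qf N r (\<lambda>b. w b + (if b = a then t else 0)) = cnj t * z + t * cnj z + cnj t * r a a * t"
    using qf_pert[OF p a, of w t] q by (simp add: z_def)
  also have "\<dots> = complex_of_real (s * (s * d - 2)) * (z * cnj z)"
  proof -
    have 1: "cnj t * z = - complex_of_real s * (z * cnj z)" by (simp add: t_def mult_ac)
    have 2: "t * cnj z = - complex_of_real s * (z * cnj z)" by (simp add: t_def mult_ac)
    have 3: "cnj t * r a a * t = complex_of_real (s * s * d) * (z * cnj z)" by (simp add: t_def d mult_ac)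
    show ?thesis unfolding 1 2 3 by (simp add: algebra_simps)
  qed
  also have "\<dots> = complex_of_real (s * (cmod z)^2 * (s * d - 2))"
    unfolding zz by (simp add: mult_ac)
  finally have "Re (qf N r (\<lambda>b. w b + (if b = a then t else 0))) = s * (cmod z)^2 * (s * d - 2)" by simp
  then have "s * (cmod z)^2 * (s * d - 2) \<ge> 0" using p unfolding psd_def by metis
  moreover have "s * d - 2 < 0" using sd by simp
  ultimately have "s * (cmod z)^2 \<le> 0"
  proof -
    assume h1: "s * (cmod z)^2 * (s * d - 2) \<ge> 0" and h2: "s * d - 2 < 0"
    show ?thesis
    proof (rule ccontr)
      assume "\<not> s * (cmod z)^2 \<le> 0"
      then have "s * (cmod z)^2 > 0" by simp
      then have "s * (cmod z)^2 * (s * d - 2) < 0" using h2 by (rule mult_pos_neg)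
      then show False using h1 by linarith
    qed
  qed
  then have "(cmod z)^2 \<le> 0" using s0 by (simp add: mult_le_0_iff)
  then have "z = 0" by simp
  then show ?thesis by (simp add: z_def)
qed

lemma sum_delta_r: "c < (N::nat) \<Longrightarrow> (\<Sum>b<N. f b * (if b = c then 1 else 0)) = (f c :: complex)"
  by (subst sum1[of c N]) auto

lemma sum_delta_l: "c < (N::nat) \<Longrightarrow> (\<Sum>b<N. (if c = b then 1 else 0) * f b) = (f c :: complex)"
  by (subst sum1[of c N]) auto

lemma stab_right:
  assumes p: "psd N r" and tr: "(\<Sum>a<N. r a a) = 1"
    and Ph: "\<And>i j. cnj (P i j) = P j i"
    and P2: "\<And>a c. a < N \<Longrightarrow> c < N \<Longrightarrow> (\<Sum>b<N. P a b * P b c) = (if a = c then 1 else 0)"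
    and tP: "(\<Sum>a<N. \<Sum>b<N. r a b * P b a) = 1"
    and a: "a < N" and c: "c < N"
  shows "(\<Sum>b<N. r a b * P b c) = r a c"
proof -
  define Q where "Q i j = ((if i = j then 1 else 0) - P i j) / 2" for i j
  have Qh: "cnj (Q i j) = Q j i" for i j
    using Ph[of i j] by (auto simp: Q_def)
  have Q2: "(\<Sum>c<N. Q b c * Q c a) = Q b a" if b: "b < N" and a: "a < N" for a b
  proof -
    have "(\<Sum>c<N. Q b c * Q c a) = (\<Sum>c<N. ((if b = c then 1 else 0) * (if c = a then 1 else 0)
         - (if b = c then 1 else 0) * P c a - P b c * (if c = a then 1 else 0) + P b c * P c a) / 4)"
      by (intro sum.cong refl) (simp add: Q_def algebra_simps)
    also have "\<dots> = ((\<Sum>c<N. (if b = c then 1 else 0) * (if c = a then 1 else 0))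
         - (\<Sum>c<N. (if b = c then 1 else 0) * P c a) - (\<Sum>c<N. P b c * (if c = a then 1 else 0)) + (\<Sum>c<N. P b c * P c a)) / 4"
      by (simp add: sum_divide_distrib[symmetric] sum.distrib sum_subtractf)
    also have "\<dots> = ((if b = a then 1 else 0) - P b a - P b a + (if b = a then 1 else 0)) / 4"
      using sum_delta_l[OF b, of "\<lambda>c. (if c = a then 1 else 0)"] sum_delta_l[OF b, of "\<lambda>c. P c a"]
        sum_delta_r[OF a, of "\<lambda>c. P b c"] P2[OF b a] by simp
    also have "\<dots> = Q b a" by (simp add: Q_def field_simps)
    finally show ?thesis .
  qed
  have "(\<Sum>c<N. qf N r (\<lambda>b. Q b c)) = (\<Sum>c<N. \<Sum>i<N. \<Sum>j<N. r i j * (Q j c * Q c i))"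
    unfolding qf_def by (intro sum.cong refl) (simp add: Qh mult_ac)
  also have "\<dots> = (\<Sum>i<N. \<Sum>j<N. r i j * (\<Sum>c<N. Q j c * Q c i))"
  proof -
    have "(\<Sum>c<N. \<Sum>i<N. \<Sum>j<N. r i j * (Q j c * Q c i)) = (\<Sum>i<N. \<Sum>c<N. \<Sum>j<N. r i j * (Q j c * Q c i))"
      by (rule sum.swap)
    also have "\<dots> = (\<Sum>i<N. \<Sum>j<N. \<Sum>c<N. r i j * (Q j c * Q c i))"
      by (rule sum.cong[OF refl], rule sum.swap)
    finally show ?thesis by (simp add: sum_distrib_left)
  qed
  also have "\<dots> = (\<Sum>i<N. \<Sum>j<N. r i j * Q j i)"
    by (intro sum.cong refl) (simp add: Q2)
  also have "\<dots> = ((\<Sum>i<N. \<Sum>j<N. r i j * (if j = i then 1 else 0)) - (\<Sum>i<N. \<Sum>j<N. r i j * P j i)) / 2"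
    by (simp add: Q_def sum_divide_distrib[symmetric] sum_subtractf right_diff_distrib)
  also have "\<dots> = 0"
    using tr tP by (simp add: sum_delta_r)
  finally have S0: "(\<Sum>c<N. qf N r (\<lambda>b. Q b c)) = 0" .
  have nn: "\<And>c. Re (qf N r (\<lambda>b. Q b c)) \<ge> 0" and im: "\<And>c. Im (qf N r (\<lambda>b. Q b c)) = 0"
    using p unfolding psd_def by auto
  have "(\<Sum>c<N. Re (qf N r (\<lambda>b. Q b c))) = 0" using arg_cong[OF S0, of Re] by (simp add: Re_sum)
  then have "\<forall>c\<in>{..<N}. Re (qf N r (\<lambda>b. Q b c)) = 0"
    using sum_nonneg_eq_0_iff[of "{..<N}" "\<lambda>c. Re (qf N r (\<lambda>b. Q b c))"] nn by auto
  then have "qf N r (\<lambda>b. Q b c) = 0" using im c by (simp add: complex_eq_iff)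
  from psd_kernel_zero[OF p a this]
  have "(\<Sum>b<N. r a b * Q b c) = 0" .
  then have "((\<Sum>b<N. r a b * (if b = c then 1 else 0)) - (\<Sum>b<N. r a b * P b c)) / 2 = 0"
    by (simp add: Q_def sum_divide_distrib[symmetric] sum_subtractf right_diff_distrib)
  then show ?thesis using sum_delta_r[OF c, of "r a"] by simp
qed

definition mv :: "nat \<Rightarrow> pvec \<Rightarrow> (nat \<Rightarrow> complex) \<Rightarrow> nat \<Rightarrow> complex" where
  "mv n f v i = (\<Sum>j<(2::nat)^n. sg n f i j * v j)"

lemma sg_herm': "cnj (sg n f i j) = sg n f j i"
  using sg_herm[of n f j i] by simp

lemma mv_mv: "mv n f (mv n g v) i = cf n f g * mv n (padd f g) v i"
proof -
  have "mv n f (mv n g v) i = (\<Sum>j<(2::nat)^n. \<Sum>k<(2::nat)^n. sg n f i j * sg n g j k * v k)"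
    by (simp add: mv_def sum_distrib_left mult.assoc)
  also have "\<dots> = (\<Sum>k<(2::nat)^n. \<Sum>j<(2::nat)^n. sg n f i j * sg n g j k * v k)"
    by (rule sum.swap)
  also have "\<dots> = (\<Sum>k<(2::nat)^n. (\<Sum>j<(2::nat)^n. sg n f i j * sg n g j k) * v k)"
    by (simp add: sum_distrib_right)
  also have "\<dots> = (\<Sum>k<(2::nat)^n. cf n f g * sg n (padd f g) i k * v k)"
    by (simp add: sg_mult)
  also have "\<dots> = cf n f g * mv n (padd f g) v i"
    by (simp add: mv_def sum_distrib_left mult.assoc)
  finally show ?thesis .
qed

lemma mv_anti: "symp n h g \<Longrightarrow> mv n h (mv n g v) i = - mv n g (mv n h v) i"
  by (simp add: mv_mv cf_comm[of n h g] padd_comm[of h g])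

lemma mv_scale: "mv n f (\<lambda>j. c * v j) i = c * mv n f v i"
  by (simp add: mv_def sum_distrib_left mult_ac)

lemma mv_diff: "mv n f (\<lambda>j. v j - u j) i = mv n f v i - mv n f u i"
  by (simp add: mv_def sum_subtractf right_diff_distrib)

lemma mv_adj: "(\<Sum>i<(2::nat)^n. cnj (a i) * mv n f v i) = (\<Sum>j<(2::nat)^n. cnj (mv n f a j) * v j)"
proof -
  have "(\<Sum>i<(2::nat)^n. cnj (a i) * mv n f v i) = (\<Sum>i<(2::nat)^n. \<Sum>j<(2::nat)^n. cnj (a i) * sg n f i j * v j)"
    by (simp add: mv_def sum_distrib_left mult.assoc)
  also have "\<dots> = (\<Sum>j<(2::nat)^n. \<Sum>i<(2::nat)^n. cnj (a i) * sg n f i j * v j)"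
    by (rule sum.swap)
  also have "\<dots> = (\<Sum>j<(2::nat)^n. cnj (mv n f a j) * v j)"
    by (simp add: mv_def sum_distrib_left sum_distrib_right sg_herm' mult_ac)
  finally show ?thesis .
qed

lemma mv_complete:
  assumes x: "x < 2^n" and y: "y < 2^n"
  shows "(\<Sum>p<(2::nat)^n. \<Sum>q<(2::nat)^n. cnj (sg n (bit p, bit q) x y) * (\<Sum>i<(2::nat)^n. cnj (a i) * mv n (bit p, bit q) z i))
     = 2^n * cnj (a x) * z y"
proof -
  have "(\<Sum>p<(2::nat)^n. \<Sum>q<(2::nat)^n. cnj (sg n (bit p, bit q) x y) * (\<Sum>i<(2::nat)^n. cnj (a i) * mv n (bit p, bit q) z i))
    = (\<Sum>p<(2::nat)^n. \<Sum>q<(2::nat)^n. \<Sum>i<(2::nat)^n. \<Sum>j<(2::nat)^n. cnj (a i) * z j * (cnj (sg n (bit p, bit q) x y) * sg n (bit p, bit q) i j))"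
    by (simp add: mv_def sum_distrib_left mult_ac)
  also have "\<dots> = (\<Sum>i<(2::nat)^n. \<Sum>j<(2::nat)^n. \<Sum>p<(2::nat)^n. \<Sum>q<(2::nat)^n. cnj (a i) * z j * (cnj (sg n (bit p, bit q) x y) * sg n (bit p, bit q) i j))"
  proof -
    have "(\<Sum>p<(2::nat)^n. \<Sum>q<(2::nat)^n. \<Sum>i<(2::nat)^n. \<Sum>j<(2::nat)^n. cnj (a i) * z j * (cnj (sg n (bit p, bit q) x y) * sg n (bit p, bit q) i j))
      = (\<Sum>p<(2::nat)^n. \<Sum>i<(2::nat)^n. \<Sum>q<(2::nat)^n. \<Sum>j<(2::nat)^n. cnj (a i) * z j * (cnj (sg n (bit p, bit q) x y) * sg n (bit p, bit q) i j))"
      by (rule sum.cong[OF refl], rule sum.swap)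
    also have "\<dots> = (\<Sum>i<(2::nat)^n. \<Sum>p<(2::nat)^n. \<Sum>q<(2::nat)^n. \<Sum>j<(2::nat)^n. cnj (a i) * z j * (cnj (sg n (bit p, bit q) x y) * sg n (bit p, bit q) i j))"
      by (rule sum.swap)
    also have "\<dots> = (\<Sum>i<(2::nat)^n. \<Sum>p<(2::nat)^n. \<Sum>j<(2::nat)^n. \<Sum>q<(2::nat)^n. cnj (a i) * z j * (cnj (sg n (bit p, bit q) x y) * sg n (bit p, bit q) i j))"
      by (rule sum.cong[OF refl], rule sum.cong[OF refl], rule sum.swap)
    also have "\<dots> = (\<Sum>i<(2::nat)^n. \<Sum>j<(2::nat)^n. \<Sum>p<(2::nat)^n. \<Sum>q<(2::nat)^n. cnj (a i) * z j * (cnj (sg n (bit p, bit q) x y) * sg n (bit p, bit q) i j))"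
      by (rule sum.cong[OF refl], rule sum.swap)
    finally show ?thesis .
  qed
  also have "\<dots> = (\<Sum>i<(2::nat)^n. \<Sum>j<(2::nat)^n. cnj (a i) * z j * (if i = x \<and> j = y then 2^n else 0))"
    by (intro sum.cong refl) (simp add: sum_distrib_left[symmetric] sg_complete x y)
  also have "\<dots> = (\<Sum>j<(2::nat)^n. cnj (a x) * z j * (if j = y then 2^n else 0))"
    by (subst sum1[OF x, where h="\<lambda>i. \<Sum>j<(2::nat)^n. cnj (a i) * z j * (if i = x \<and> j = y then 2^n else 0)"]) auto
  also have "\<dots> = 2^n * cnj (a x) * z y"
    by (subst sum1[OF y, where h="\<lambda>j. cnj (a x) * z j * (if j = y then 2^n else 0)"]) auto
  finally show ?thesis .
qed

lemma mv_cong: "(\<And>j. j < 2^n \<Longrightarrow> u j = v j) \<Longrightarrow> mv n h u i = mv n h v i"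
  unfolding mv_def by (intro sum.cong) auto

lemma bits_Gn: "(p::nat) < 2^n \<Longrightarrow> (q::nat) < 2^n \<Longrightarrow> (bit p, bit q) \<in> Gn n"
  unfolding Gn_def using bit_lt_pow[of p n] bit_lt_pow[of q n] by (auto simp: not_less[symmetric])

lemma uniq:
  assumes sd: "self_dual n S"
    and eps: "\<forall>f\<in>S. (\<epsilon> f = 1 \<or> \<epsilon> f = -1)"
    and eig: "\<forall>f\<in>S. \<forall>i<2^n. mv n f ps i = \<epsilon> f * ps i"
    and nrm: "(\<Sum>i<(2::nat)^n. cnj (ps i) * ps i) = 1"
    and w: "\<forall>f\<in>S. \<forall>i<2^n. \<epsilon> f * mv n f w i = w i"
    and y: "y < 2^n"
  shows "w y = (\<Sum>j<(2::nat)^n. cnj (ps j) * w j) * ps y"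
proof -
  define ip where "ip = (\<Sum>j<(2::nat)^n. cnj (ps j) * w j)"
  define z where "z j = w j - ip * ps j" for j
  have ee: "\<epsilon> f * \<epsilon> f = 1" "cnj (\<epsilon> f) = \<epsilon> f" if "f \<in> S" for f using eps that by auto
  have weig: "mv n f w i = \<epsilon> f * w i" if "f \<in> S" "i < 2^n" for f i
  proof -
    have "mv n f w i = \<epsilon> f * (\<epsilon> f * mv n f w i)" using ee[OF that(1)] by (simp add: mult.assoc[symmetric])
    then show ?thesis using w that by simp
  qed
  have zeig: "mv n f z i = \<epsilon> f * z i" if "f \<in> S" "i < 2^n" for f i
    unfolding z_def mv_diff mv_scale using weig[OF that] eig that by (simp add: algebra_simps)
  have z0: "(\<Sum>i<(2::nat)^n. cnj (ps i) * z i) = 0"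
  proof -
    have "(\<Sum>i<(2::nat)^n. cnj (ps i) * z i) = (\<Sum>i<(2::nat)^n. cnj (ps i) * w i) - (\<Sum>i<(2::nat)^n. ip * (cnj (ps i) * ps i))"
      by (simp add: z_def right_diff_distrib sum_subtractf mult_ac)
    also have "\<dots> = ip - ip * (\<Sum>i<(2::nat)^n. cnj (ps i) * ps i)"
      by (simp add: ip_def sum_distrib_left)
    finally have "(\<Sum>i<(2::nat)^n. cnj (ps i) * z i) = ip - ip * (\<Sum>i<(2::nat)^n. cnj (ps i) * ps i)" .
    then show ?thesis using nrm by simp
  qed
  have Ah: "(\<Sum>i<(2::nat)^n. cnj (ps i) * mv n h z i) = 0" if h: "h \<in> Gn n" for h
  proof (cases "h \<in> S")
    case True
    have "(\<Sum>i<(2::nat)^n. cnj (ps i) * mv n h z i) = \<epsilon> h * (\<Sum>i<(2::nat)^n. cnj (ps i) * z i)"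
      by (simp add: zeig[OF True] sum_distrib_left mult_ac)
    then show ?thesis using z0 by simp
  next
    case False
    have "S = {f \<in> Gn n. \<forall>g\<in>S. \<not> symp n f g}" using sd unfolding self_dual_def by blast
    then obtain g where g: "g \<in> S" "symp n h g" using False h by blast
    define A where "A = (\<Sum>i<(2::nat)^n. cnj (ps i) * mv n h z i)"
    have "mv n h z i = - \<epsilon> g * mv n g (mv n h z) i" for i
    proof -
      have "mv n h z i = mv n h (\<lambda>j. \<epsilon> g * mv n g z j) i"
        by (rule mv_cong) (simp add: zeig[OF g(1)] ee[OF g(1)] mult.assoc[symmetric])
      also have "\<dots> = \<epsilon> g * mv n h (mv n g z) i" by (rule mv_scale)
      also have "\<dots> = - \<epsilon> g * mv n g (mv n h z) i" using mv_anti[OF g(2)] by simp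
      finally show ?thesis .
    qed
    then have "A = - \<epsilon> g * (\<Sum>i<(2::nat)^n. cnj (ps i) * mv n g (mv n h z) i)"
      unfolding A_def by (simp add: sum_distrib_left mult_ac)
    also have "\<dots> = - \<epsilon> g * (\<Sum>j<(2::nat)^n. cnj (mv n g ps j) * mv n h z j)"
      by (simp add: mv_adj)
    also have "\<dots> = - \<epsilon> g * (\<Sum>j<(2::nat)^n. \<epsilon> g * (cnj (ps j) * mv n h z j))"
      using eig g(1) ee[OF g(1)] by (simp add: mult_ac)
    also have "\<dots> = - (\<epsilon> g * \<epsilon> g) * A"
      unfolding A_def by (simp add: sum_distrib_left mult_ac)
    also have "\<dots> = - A" using ee[OF g(1)] by simp
    finally have "A = - A" .
    then show ?thesis unfolding A_def by simp
  qed
  obtain x where x: "x < 2^n" "ps x \<noteq> 0"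
  proof (rule ccontr)
    assume "\<not> thesis"
    then have "\<forall>x<2^n. ps x = 0" using that by blast
    then have "(\<Sum>i<(2::nat)^n. cnj (ps i) * ps i) = 0" by simp
    then show False using nrm by simp
  qed
  have "2^n * cnj (ps x) * z y = 0"
    using mv_complete[OF x(1) y, of ps z, symmetric] Ah bits_Gn by simp
  then have "z y = 0" using x(2) by simp
  then show ?thesis unfolding z_def ip_def by simp
qed

lemma pauli_mv:
  assumes "dim_vec v = 2^n" "i < 2^n"
  shows "(pauli n f *\<^sub>v v) $ i = mv n f (\<lambda>j. v $ j) i"
  using assms by (simp add: pauli_def mv_def scalar_prod_def sg_def atLeast0LessThan)

lemma ex_nonzero:
  assumes "(\<Sum>i<(2::nat)^n. cnj (ps i) * ps i) = 1"
  obtains x where "x < 2^n" "ps x \<noteq> (0::complex)"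
proof (rule ccontr)
  assume "\<not> thesis"
  then have "\<forall>x<2^n. ps x = 0" using that by blast
  then have "(\<Sum>i<(2::nat)^n. cnj (ps i) * ps i) = 0" by simp
  then show False using assms by simp
qed

theorem lemma2:
  fixes n :: nat and part :: "nat \<Rightarrow> 'm" and M :: "'m set"
    and S :: "pvec set" and \<psi> :: "complex vec"
  assumes "finite M"
    and "\<forall>j<n. part j \<in> M"
    and "stabilizer_state n S \<psi>"
    and "S = S_loc n part M S"
  shows "Gamma n part M \<psi> = {proj n \<psi>}"
proof -
  define N where "N = (2::nat)^n"
  define ps where "ps = (\<lambda>i. \<psi> $ i)"
  have sd: "self_dual n S" and dimv: "dim_vec \<psi> = 2^n" and un: "(\<Sum>i<2^n. (cmod (\<psi> $ i))\<^sup>2) = 1"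
    using assms(3) unfolding stabilizer_state_def unit_vec_n_def by auto
  obtain \<epsilon> where epsS: "\<forall>f\<in>S. (\<epsilon> f = 1 \<or> \<epsilon> f = -1) \<and> pauli n f *\<^sub>v \<psi> = \<epsilon> f \<cdot>\<^sub>v \<psi>"
    using assms(3) unfolding stabilizer_state_def by auto
  have eps: "\<forall>f\<in>S. (\<epsilon> f = 1 \<or> \<epsilon> f = -1)" using epsS by blast
  have ee: "\<epsilon> f * \<epsilon> f = 1" "cnj (\<epsilon> f) = \<epsilon> f" if "f \<in> S" for f using eps that by auto
  have eig: "\<forall>f\<in>S. \<forall>i<2^n. mv n f ps i = \<epsilon> f * ps i"
  proof (intro ballI allI impI)
    fix f i assume f: "f \<in> S" and i: "i < (2::nat)^n"
    have "(pauli n f *\<^sub>v \<psi>) $ i = (\<epsilon> f \<cdot>\<^sub>v \<psi>) $ i" using epsS f by simp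
    then show "mv n f ps i = \<epsilon> f * ps i" using pauli_mv[OF dimv i] i dimv by (simp add: ps_def)
  qed
  have nrm: "(\<Sum>i<(2::nat)^n. cnj (ps i) * ps i) = 1"
  proof -
    have "(\<Sum>i<(2::nat)^n. cnj (ps i) * ps i) = (\<Sum>i<(2::nat)^n. complex_of_real ((cmod (ps i))\<^sup>2))"
      by (intro sum.cong refl) (metis complex_norm_square mult.commute)
    also have "\<dots> = 1" using un unfolding ps_def of_real_sum[symmetric] by simp
    finally show ?thesis .
  qed
  obtain x0 where x0: "x0 < 2^n" "ps x0 \<noteq> 0" using ex_nonzero[OF nrm] by blast
  have sub: "f2_subspace n S" using sd unfolding self_dual_def by blast
  have projE: "proj n \<psi> $$ (i,j) = ps i * cnj (ps j)" if "i < 2^n" "j < 2^n" for i j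
    using that by (simp add: proj_def ps_def)
  have proj_in: "proj n \<psi> \<in> Gamma n part M \<psi>"
  proof -
    have "density_op n (proj n \<psi>)"
      unfolding density_op_def
    proof (intro conjI allI)
      show "proj n \<psi> \<in> carrier_mat (2^n) (2^n)" by (simp add: proj_def)
      fix v :: "nat \<Rightarrow> complex"
      define s where "s = (\<Sum>i<(2::nat)^n. cnj (v i) * ps i)"
      have "(\<Sum>i<(2::nat)^n. \<Sum>j<(2::nat)^n. cnj (v i) * proj n \<psi> $$ (i, j) * v j) = s * cnj s"
        unfolding s_def cnj_sum sum_product by (intro sum.cong refl) (simp add: projE mult_ac)
      also have "\<dots> = complex_of_real ((cmod s)\<^sup>2)" using complex_norm_square[of s] by simp
      finally show "let q = (\<Sum>i<2^n. \<Sum>j<2^n. cnj (v i) * proj n \<psi> $$ (i, j) * v j) in Im q = 0 \<and> Re q \<ge> 0"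
        by simp
    next
      show "(\<Sum>i<2^n. proj n \<psi> $$ (i, i)) = 1"
        using nrm by (simp add: projE mult.commute)
    qed
    then show ?thesis unfolding Gamma_def by simp
  qed
  have "\<rho> = proj n \<psi>" if \<rho>: "\<rho> \<in> Gamma n part M \<psi>" for \<rho>
  proof -
    have dens: "density_op n \<rho>" and pt: "\<forall>\<alpha>\<in>M. ptrace n part \<alpha> \<rho> = ptrace n part \<alpha> (proj n \<psi>)"
      using \<rho> unfolding Gamma_def by auto
    define r where "r i j = \<rho> $$ (i,j)" for i j
    have car: "\<rho> \<in> carrier_mat (2^n) (2^n)" using dens unfolding density_op_def by blast
    have psd: "psd N r" using dens unfolding density_op_def psd_def qf_def r_def N_def Let_def by blast
    have tr: "(\<Sum>a<N. r a a) = 1" using dens unfolding density_op_def r_def N_def by blast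
    have loc: "\<epsilon> g * (\<Sum>b<N. r a b * sg n g b c) = r a c"
      if \<alpha>: "\<alpha> \<in> M" and g: "g \<in> colocal n part S \<alpha>" and a: "a < N" and c: "c < N" for \<alpha> g a c
    proof -
      have gS: "g \<in> S" using g unfolding colocal_def by blast
      have gl: "\<forall>j<n. part j = \<alpha> \<longrightarrow> \<not> fst g j \<and> \<not> snd g j" using g unfolding colocal_def by blast
      define P where "P i j = \<epsilon> g * sg n g i j" for i j
      have Ph: "\<And>i j. cnj (P i j) = P j i" by (simp add: P_def ee[OF gS] sg_herm')
      have P2: "(\<Sum>b<N. P a b * P b c) = (if a = c then 1 else 0)" if "a < N" "c < N" for a c
      proof -
        have "(\<Sum>b<N. P a b * P b c) = (\<epsilon> g * \<epsilon> g) * (\<Sum>b<N. sg n g a b * sg n g b c)"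
          by (simp add: P_def sum_distrib_left mult_ac)
        also have "\<dots> = sg n pzero a c" using ee[OF gS] by (simp add: N_def sg_mult cf_self padd_self)
        finally show ?thesis using that sg_zero by (simp add: N_def)
      qed
      have t1: "(\<Sum>i<(2::nat)^n. \<Sum>j<(2::nat)^n. sg n g i j * \<rho> $$ (j,i)) = \<epsilon> g"
      proof -
        have "(\<Sum>i<(2::nat)^n. \<Sum>j<(2::nat)^n. sg n g i j * \<rho> $$ (j,i)) = (\<Sum>i<(2::nat)^n. \<Sum>j<(2::nat)^n. sg n g i j * proj n \<psi> $$ (j,i))"
          unfolding trace_ptrace[OF gl] using pt \<alpha> by simp
        also have "\<dots> = (\<Sum>i<(2::nat)^n. cnj (ps i) * mv n g ps i)"
          by (intro sum.cong refl) (simp add: projE mv_def sum_distrib_left mult_ac)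
        also have "\<dots> = (\<Sum>i<(2::nat)^n. \<epsilon> g * (cnj (ps i) * ps i))"
          by (intro sum.cong refl) (simp add: eig gS)
        also have "\<dots> = \<epsilon> g" using nrm by (simp add: sum_distrib_left[symmetric])
        finally show ?thesis .
      qed
      have tP: "(\<Sum>a<N. \<Sum>b<N. r a b * P b a) = 1"
      proof -
        have "(\<Sum>a<N. \<Sum>b<N. r a b * P b a) = (\<Sum>b<N. \<Sum>a<N. r a b * P b a)" by (rule sum.swap)
        also have "\<dots> = \<epsilon> g * (\<Sum>b<N. \<Sum>a<N. sg n g b a * \<rho> $$ (a,b))"
          by (simp add: P_def r_def sum_distrib_left mult_ac)
        also have "\<dots> = 1" using t1 ee[OF gS] by (simp add: N_def)
        finally show ?thesis .
      qed
      have "(\<Sum>b<N. r a b * P b c) = r a c" by (rule stab_right[OF psd tr Ph P2 tP a c])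
      then show ?thesis by (simp add: P_def sum_distrib_left mult_ac)
    qed
    define Good where "Good f \<longleftrightarrow> f \<in> S \<and> (\<forall>a<N. \<forall>c<N. \<epsilon> f * (\<Sum>b<N. r a b * sg n f b c) = r a c)" for f
    have span: "Good f" if "f \<in> f2_span (\<Union>\<alpha>\<in>M. colocal n part S \<alpha>)" for f
      using that
    proof (induction rule: f2_span.induct)
      case zero
      have z0: "pzero \<in> S" using sub unfolding f2_subspace_def by blast
      have e0: "\<epsilon> pzero = 1"
      proof -
        have "mv n pzero ps x0 = (\<Sum>j<(2::nat)^n. (if x0 = j then 1 else 0) * ps j)"
          unfolding mv_def by (intro sum.cong refl) (simp add: sg_zero x0(1))
        also have "\<dots> = ps x0" by (rule sum_delta_l[OF x0(1)])
        finally have "ps x0 = \<epsilon> pzero * ps x0" using eig z0 x0(1) by simp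
        then show ?thesis using x0(2) by simp
      qed
      have "(\<Sum>b<N. r a b * sg n pzero b c) = r a c" if "a < N" "c < N" for a c
      proof -
        have "(\<Sum>b<N. r a b * sg n pzero b c) = (\<Sum>b<N. r a b * (if b = c then 1 else 0))"
          using that by (intro sum.cong refl) (simp add: sg_zero N_def)
        also have "\<dots> = r a c" by (rule sum_delta_r[OF that(2)])
        finally show ?thesis .
      qed
      then show ?case unfolding Good_def using z0 e0 by simp
    next
      case (add x y)
      obtain \<alpha> where \<alpha>: "\<alpha> \<in> M" "x \<in> colocal n part S \<alpha>" using add.hyps(1) by blast
      have xS: "x \<in> S" using \<alpha>(2) unfolding colocal_def by blast
      have yS: "y \<in> S" and Gy: "\<forall>a<N. \<forall>c<N. \<epsilon> y * (\<Sum>b<N. r a b * sg n y b c) = r a c"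
        using add.IH unfolding Good_def by auto
      have xyS: "padd x y \<in> S" using sub xS yS unfolding f2_subspace_def by blast
      have ex: "\<epsilon> x * \<epsilon> y = cf n x y * \<epsilon> (padd x y)"
      proof -
        have "mv n x (mv n y ps) x0 = cf n x y * \<epsilon> (padd x y) * ps x0"
          using eig xyS x0(1) by (simp add: mv_mv)
        moreover have "mv n x (mv n y ps) x0 = mv n x (\<lambda>j. \<epsilon> y * ps j) x0"
          by (rule mv_cong) (simp add: eig yS)
        moreover have "\<dots> = \<epsilon> x * \<epsilon> y * ps x0" using eig xS x0(1) by (simp add: mv_scale)
        ultimately have "\<epsilon> x * \<epsilon> y * ps x0 = cf n x y * \<epsilon> (padd x y) * ps x0" by simp
        then show ?thesis using x0(2) by simp
      qed
      have exy: "\<epsilon> x * \<epsilon> y * cf n x y = \<epsilon> (padd x y)"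
      proof -
        let ?c = "cf n x y" and ?e = "\<epsilon> (padd x y)"
        have "?c = \<epsilon> x * \<epsilon> y * ?e" using ex ee[OF xyS] by (metis mult.assoc mult.right_neutral)
        then have "?c * ?c = (\<epsilon> x * \<epsilon> x) * (\<epsilon> y * \<epsilon> y) * (?e * ?e)" by (simp add: mult_ac)
        then have cc: "?c * ?c = 1" using ee xS yS xyS by simp
        have "\<epsilon> x * \<epsilon> y * ?c = (?c * ?c) * ?e" using ex by (simp add: mult_ac)
        then show ?thesis using cc by simp
      qed
      have "\<epsilon> (padd x y) * (\<Sum>b<N. r a b * sg n (padd x y) b c) = r a c" if a: "a < N" and c: "c < N" for a c
      proof -
        have "r a c = \<epsilon> y * (\<Sum>b<N. r a b * sg n y b c)" using Gy a c by simp
        also have "\<dots> = \<epsilon> y * (\<Sum>b<N. (\<epsilon> x * (\<Sum>d<N. r a d * sg n x d b)) * sg n y b c)"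
          by (intro arg_cong[where f="\<lambda>s. \<epsilon> y * s"] sum.cong refl) (simp add: loc[OF \<alpha> a])
        also have "\<dots> = \<epsilon> x * \<epsilon> y * (\<Sum>b<N. \<Sum>d<N. r a d * (sg n x d b * sg n y b c))"
          by (simp add: sum_distrib_left sum_distrib_right mult_ac)
        also have "(\<Sum>b<N. \<Sum>d<N. r a d * (sg n x d b * sg n y b c)) = (\<Sum>d<N. \<Sum>b<N. r a d * (sg n x d b * sg n y b c))"
          by (rule sum.swap)
        also have "\<dots> = (\<Sum>d<N. r a d * (cf n x y * sg n (padd x y) d c))"
          by (simp add: sum_distrib_left[symmetric] sg_mult N_def)
        also have "\<epsilon> x * \<epsilon> y * \<dots> = (\<epsilon> x * \<epsilon> y * cf n x y) * (\<Sum>d<N. r a d * sg n (padd x y) d c)"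
          by (simp add: sum_distrib_left mult_ac)
        finally show ?thesis using exy by simp
      qed
      then show ?case unfolding Good_def using xyS by blast
    qed
    have allS: "Good f" if "f \<in> S" for f
      using span that assms(4) unfolding S_loc_def by blast
    have rowform: "cnj (r a b) = (\<Sum>j<(2::nat)^n. cnj (ps j) * cnj (r a j)) * ps b" if a: "a < N" and b: "b < N" for a b
    proof (rule uniq[OF sd eps eig nrm _ b[unfolded N_def]])
      show "\<forall>f\<in>S. \<forall>i<2^n. \<epsilon> f * mv n f (\<lambda>b. cnj (r a b)) i = cnj (r a i)"
      proof (intro ballI allI impI)
        fix f i assume f: "f \<in> S" and i: "i < (2::nat)^n"
        have "mv n f (\<lambda>b. cnj (r a b)) i = cnj (\<Sum>b<N. r a b * sg n f b i)"
          by (simp add: mv_def N_def sg_herm' mult.commute)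
        then have "\<epsilon> f * mv n f (\<lambda>b. cnj (r a b)) i = cnj (\<epsilon> f * (\<Sum>b<N. r a b * sg n f b i))"
          using ee[OF f] by simp
        also have "\<dots> = cnj (r a i)" using allS[OF f] a i unfolding Good_def N_def by simp
        finally show "\<epsilon> f * mv n f (\<lambda>b. cnj (r a b)) i = cnj (r a i)" .
      qed
    qed
    define d where "d a = cnj (\<Sum>j<(2::nat)^n. cnj (ps j) * cnj (r a j))" for a
    have r1: "r a b = d a * cnj (ps b)" if "a < N" "b < N" for a b
      using arg_cong[OF rowform[OF that], of cnj] by (simp add: d_def)
    have x0N: "x0 < N" using x0 by (simp add: N_def)
    define \<kappa> where "\<kappa> = cnj (d x0) / cnj (ps x0)"
    have dk: "d a = \<kappa> * ps a" if a: "a < N" for a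
    proof -
      have "r a x0 = cnj (r x0 a)" using psd_herm[OF psd x0N a] by simp
      then have "d a * cnj (ps x0) = cnj (d x0) * ps a" using r1[OF a x0N] r1[OF x0N a] by simp
      then show ?thesis using x0(2) unfolding \<kappa>_def by (simp add: field_simps)
    qed
    have r2: "r a b = \<kappa> * (ps a * cnj (ps b))" if "a < N" "b < N" for a b
      using r1[OF that] dk[OF that(1)] by simp
    have "1 = (\<Sum>a<N. \<kappa> * (cnj (ps a) * ps a))"
      unfolding tr[symmetric] by (intro sum.cong refl) (simp add: r2 mult_ac)
    also have "\<dots> = \<kappa>" using nrm by (simp add: sum_distrib_left[symmetric] N_def)
    finally have k1: "\<kappa> = 1" by simp
    show ?thesis
    proof (rule eq_matI)
      show "dim_row \<rho> = dim_row (proj n \<psi>)" "dim_col \<rho> = dim_col (proj n \<psi>)"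
        using car by (auto simp: proj_def)
      fix i j assume "i < dim_row (proj n \<psi>)" "j < dim_col (proj n \<psi>)"
      then have ij: "i < N" "j < N" by (auto simp: proj_def N_def)
      show "\<rho> $$ (i,j) = proj n \<psi> $$ (i,j)"
        using r2[OF ij] k1 projE ij unfolding r_def N_def by simp
    qed
  qed
  then show ?thesis using proj_in by blast
qed

end
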